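(* Fix a positive integer $k$ and a real number $\epsilon > 0$. Then all but finitely many numerical semigroups $\Lambda$ with $e(\Lambda) = k$ satisfy $c(\Lambda) > 0$ and \[ \frac{c'(\Lambda)}{c(\Lambda)} > \frac{1}{k} - \epsilon. \]
   Context: A numerical semigroup is a subset $\Lambda \subseteq \mathbb{Z}_{\ge 0}$ that contains $0$, is closed under addition, and has finite complement in $\mathbb{Z}_{\ge 0}$. Every numerical semigroup has a unique minimal (with respect to inclusion) generating set, which is finite; its size is the embedding dimension $e(\Lambda)$. The conductor is $c(\Lambda) = \max(\mathbb{Z}_{\ge 0}\setminus\Lambda) + 1$ (with $c(\Lambda)=0$ if $\Lambda = \mathbb{Z}_{\ge 0}$). Define $c'(\Lambda) = |\{\lambda \in \Lambda : \lambda < c(\Lambda)\}|$. *)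

theory Defs
  imports Main "HOL-Library.Infinite_Set" Complex_Main
begin

definition numerical_semigroup :: "nat set \<Rightarrow> bool" where
  "numerical_semigroup S \<longleftrightarrow> 0 \<in> S \<and> (\<forall>x\<in>S. \<forall>y\<in>S. x + y \<in> S) \<and> finite (UNIV - S)"

inductive_set monoid_gen :: "nat set \<Rightarrow> nat set" for A :: "nat set" where
  zero: "0 \<in> monoid_gen A"
| add: "a \<in> A \<Longrightarrow> x \<in> monoid_gen A \<Longrightarrow> a + x \<in> monoid_gen A"

definition minimal_generating_set :: "nat set \<Rightarrow> nat set" where
  "minimal_generating_set S =
     (THE A. monoid_gen A = S \<and> (\<forall>B. B \<subset> A \<longrightarrow> monoid_gen B \<noteq> S))"

definition embedding_dimension :: "nat set \<Rightarrow> nat" where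
  "embedding_dimension S = card (minimal_generating_set S)"

definition conductor :: "nat set \<Rightarrow> nat" where
  "conductor S = (if UNIV - S = {} then 0 else Max (UNIV - S) + 1)"

definition conductor' :: "nat set \<Rightarrow> nat" where
  "conductor' S = card {x \<in> S. x < conductor S}"

end

theory Submission
  imports Defs "HOL-Library.FuncSet"
begin

lemma ns_zero: "numerical_semigroup S \<Longrightarrow> 0 \<in> S"
  by (simp add: numerical_semigroup_def)

lemma ns_add: "numerical_semigroup S \<Longrightarrow> x \<in> S \<Longrightarrow> y \<in> S \<Longrightarrow> x + y \<in> S"
  by (simp add: numerical_semigroup_def)

lemma ns_mult: "numerical_semigroup S \<Longrightarrow> x \<in> S \<Longrightarrow> j * x \<in> S"
  by (induction j) (auto simp: ns_zero ns_add)

lemma ns_fin: "numerical_semigroup S \<Longrightarrow> finite (UNIV - S)"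
  by (simp add: numerical_semigroup_def)

lemma ns_cond: assumes "numerical_semigroup S" "conductor S \<le> x" shows "x \<in> S"
proof (rule ccontr)
  assume "x \<notin> S"
  then have "x \<in> UNIV - S" by simp
  moreover have "finite (UNIV - S)" using ns_fin assms(1) .
  ultimately have "x \<le> Max (UNIV - S)" "UNIV - S \<noteq> {}" by auto
  then show False using assms(2) unfolding conductor_def by auto
qed

lemma ns_gap: assumes "numerical_semigroup S" "x \<notin> S" shows "x < conductor S"
  using ns_cond[OF assms(1)] assms(2) by (meson not_le)

definition mult :: "nat set \<Rightarrow> nat" where
  "mult S = (LEAST x. x \<in> S \<and> x \<noteq> 0)"

lemma mult_props: assumes "numerical_semigroup S"
  shows "mult S \<in> S" "mult S \<noteq> 0" "\<And>x. x \<in> S \<Longrightarrow> x \<noteq> 0 \<Longrightarrow> mult S \<le> x"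
proof -
  have ex: "conductor S + 1 \<in> S \<and> conductor S + 1 \<noteq> 0" using ns_cond[OF assms] by auto
  show "mult S \<in> S" "mult S \<noteq> 0" using LeastI[of "\<lambda>x. x \<in> S \<and> x \<noteq> 0", OF ex]
    unfolding mult_def by auto
  show "\<And>x. x \<in> S \<Longrightarrow> x \<noteq> 0 \<Longrightarrow> mult S \<le> x" unfolding mult_def
    by (simp add: Least_le)
qed

definition atoms :: "nat set \<Rightarrow> nat set" where
  "atoms S = {a \<in> S. a \<noteq> 0 \<and> (\<forall>x\<in>S. \<forall>y\<in>S. a = x + y \<longrightarrow> x = 0 \<or> y = 0)}"

lemma mg_add: "x \<in> monoid_gen A \<Longrightarrow> y \<in> monoid_gen A \<Longrightarrow> x + y \<in> monoid_gen A"
proof (induction x rule: monoid_gen.induct)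
  case zero then show ?case by simp
next
  case (add a x) then show ?case using monoid_gen.add[of a A "x + y"] by (simp add: add.assoc)
qed

lemma mg_sub: "numerical_semigroup S \<Longrightarrow> A \<subseteq> S \<Longrightarrow> monoid_gen A \<subseteq> S"
proof
  fix x assume ns: "numerical_semigroup S" and AS: "A \<subseteq> S" and x: "x \<in> monoid_gen A"
  from x show "x \<in> S" using ns AS by (induction x rule: monoid_gen.induct) (auto simp: ns_zero ns_add)
qed

lemma mg_atoms: assumes ns: "numerical_semigroup S" shows "monoid_gen (atoms S) = S"
proof
  show "monoid_gen (atoms S) \<subseteq> S" using mg_sub[OF ns] by (auto simp: atoms_def)
next
  show "S \<subseteq> monoid_gen (atoms S)"
  proof
    fix s assume "s \<in> S"
    then show "s \<in> monoid_gen (atoms S)"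
    proof (induction s rule: less_induct)
      case (less s)
      show ?case
      proof (cases "s \<in> atoms S \<or> s = 0")
        case True
        then show ?thesis using monoid_gen.add[of s "atoms S" 0] monoid_gen.zero by auto
      next
        case False
        then obtain x y where "x \<in> S" "y \<in> S" "s = x + y" "x \<noteq> 0" "y \<noteq> 0"
          using less.prems unfolding atoms_def by auto
        then show ?thesis using less.IH mg_add by auto
      qed
    qed
  qed
qed

lemma atoms_sub: assumes ns: "numerical_semigroup S" and B: "monoid_gen B = S"
  shows "atoms S \<subseteq> B"
proof -
  have "x \<in> monoid_gen B \<Longrightarrow> x \<in> atoms S \<Longrightarrow> x \<in> B" for x
  proof (induction x rule: monoid_gen.induct)
    case zero then show ?case by (simp add: atoms_def)
  next
    case (add b x)
    have bS: "b \<in> S" using monoid_gen.add[OF add.hyps(1) monoid_gen.zero] B by simp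
    have xS: "x \<in> S" using add.hyps(2) B by simp
    show ?case
    proof (cases "b = 0")
      case True then show ?thesis using add by simp
    next
      case False
      then have "x = 0" using add.prems bS xS unfolding atoms_def by blast
      then show ?thesis using add.hyps(1) by simp
    qed
  qed
  then show ?thesis using B ns by (auto simp: atoms_def)
qed

lemma mgs_atoms: assumes ns: "numerical_semigroup S"
  shows "minimal_generating_set S = atoms S"
  unfolding minimal_generating_set_def
proof (rule the_equality)
  show "monoid_gen (atoms S) = S \<and> (\<forall>B. B \<subset> atoms S \<longrightarrow> monoid_gen B \<noteq> S)"
    using mg_atoms[OF ns] atoms_sub[OF ns] by blast
next
  fix A assume A: "monoid_gen A = S \<and> (\<forall>B. B \<subset> A \<longrightarrow> monoid_gen B \<noteq> S)"
  then have "atoms S \<subseteq> A" using atoms_sub[OF ns] by blast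
  then show "A = atoms S" using A mg_atoms[OF ns] by blast
qed

lemma rep: "x \<in> monoid_gen A \<Longrightarrow> finite A \<Longrightarrow> \<exists>l. x = (\<Sum>a\<in>A. l a * a)"
proof (induction x rule: monoid_gen.induct)
  case zero then show ?case by (intro exI[of _ "\<lambda>_. 0"]) simp
next
  case (add a x)
  then obtain l where l: "x = (\<Sum>a\<in>A. l a * a)" by auto
  have "(\<Sum>b\<in>A. (l(a := l a + 1)) b * b) = (\<Sum>b\<in>A. l b * b + (if b = a then a else 0))"
    by (rule sum.cong) auto
  also have "\<dots> = x + a" using add.hyps(1) add.prems l by (simp add: sum.distrib)
  finally show ?case by (metis add.commute)
qed

lemma sum_in: "finite A \<Longrightarrow> numerical_semigroup S \<Longrightarrow> A \<subseteq> S \<Longrightarrow> (\<Sum>a\<in>A. f a * a) \<in> S"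
  by (induction A rule: finite_induct) (auto simp: ns_zero ns_add ns_mult)

locale nsg =
  fixes S :: "nat set"
  assumes ns: "numerical_semigroup S"
begin

abbreviation "m \<equiv> mult S"
abbreviation "c \<equiv> conductor S"
abbreviation "A \<equiv> atoms S"
definition "Ap = {w \<in> S. \<not> (m \<le> w \<and> w - m \<in> S)}"
abbreviation "W \<equiv> c + m - 1"

lemma m_pos: "0 < m" using mult_props[OF ns] by auto
lemma mS: "m \<in> S" using mult_props[OF ns] by auto
lemma m_le: "x \<in> S \<Longrightarrow> x \<noteq> 0 \<Longrightarrow> m \<le> x" using mult_props[OF ns] by auto

lemma atom_props: "a \<in> A \<Longrightarrow> a \<in> S \<and> a \<noteq> 0 \<and> m \<le> a"
  using m_le by (auto simp: atoms_def)

lemma m_atom: "m \<in> A"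
proof -
  have "x = 0 \<or> y = 0" if "x \<in> S" "y \<in> S" "m = x + y" for x y
    using m_le[OF that(1)] m_le[OF that(2)] that(3) m_pos by (cases "x = 0"; cases "y = 0") auto
  then show ?thesis using mS m_pos by (auto simp: atoms_def)
qed

lemma A_fin: "finite A"
proof -
  have "A \<subseteq> {..c+m}"
  proof
    fix a assume a: "a \<in> A"
    show "a \<in> {..c+m}"
    proof (cases "a \<le> m")
      case True then show ?thesis by simp
    next
      case False
      have "a - m \<notin> S"
      proof
        assume h: "a - m \<in> S"
        have eq: "a = m + (a - m)" using False by simp
        from a have "\<forall>x\<in>S. \<forall>y\<in>S. a = x + y \<longrightarrow> x = 0 \<or> y = 0" by (simp add: atoms_def)
        from bspec[OF bspec[OF this mS] h] have "a = m + (a - m) \<longrightarrow> m = 0 \<or> a - m = 0" .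
        from this eq have "m = 0 \<or> a - m = 0" by (rule mp)
        then show False using m_pos False by auto
      qed
      then have "a - m < c" using ns_gap[OF ns] by auto
      then show ?thesis by simp
    qed
  qed
  then show ?thesis using finite_subset by blast
qed

lemma Ap_sub: "w \<in> Ap \<Longrightarrow> w \<le> W"
proof -
  assume w: "w \<in> Ap"
  show "w \<le> W"
  proof (cases "m \<le> w")
    case True
    then have "w - m \<notin> S" using w by (auto simp: Ap_def)
    then have "w - m < c" using ns_gap[OF ns] by auto
    then show ?thesis using True by simp
  next
    case False then show ?thesis by simp
  qed
qed

lemma Ap_fin: "finite Ap"
  using Ap_sub by (meson finite_atMost finite_subset subsetI atMost_iff)

lemma Ap_S: "w \<in> Ap \<Longrightarrow> w \<in> S" by (simp add: Ap_def)

lemma Ap_down: assumes "w \<in> Ap" "a \<in> S" "j * a \<le> w" "w - j * a \<in> S"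
  shows "w - j * a \<in> Ap"
proof -
  have "\<not> (m \<le> w - j*a \<and> w - j*a - m \<in> S)"
  proof
    assume h: "m \<le> w - j*a \<and> w - j*a - m \<in> S"
    then have "(w - j*a - m) + j * a \<in> S" using ns_add[OF ns] ns_mult[OF ns assms(2)] by auto
    moreover have "(w - j*a - m) + j * a = w - m" using h assms(3) by arith
    ultimately show False using assms(1) h assms(3) by (auto simp: Ap_def)
  qed
  then show ?thesis using assms(4) by (simp add: Ap_def)
qed

lemma Ap_card: "m \<le> card Ap"
proof -
  define g where "g r = (LEAST w. w \<in> S \<and> w mod m = r)" for r
  have gp: "g r \<in> S \<and> g r mod m = r \<and> (\<forall>w. w \<in> S \<and> w mod m = r \<longrightarrow> g r \<le> w)" if "r < m" for r
  proof -
    have "c \<le> c * m" using m_pos by simp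
    then have "c \<le> c * m + r" by linarith
    then have "c * m + r \<in> S" using ns_cond[OF ns] by blast
    moreover have "(c * m + r) mod m = r" using that by simp
    ultimately have ex: "\<exists>w. w \<in> S \<and> w mod m = r" by blast
    show ?thesis unfolding g_def using LeastI_ex[OF ex] Least_le[of "\<lambda>w. w \<in> S \<and> w mod m = r"] by blast
  qed
  have "g ` {..<m} \<subseteq> Ap"
  proof
    fix x assume "x \<in> g ` {..<m}"
    then obtain r where r: "r < m" "x = g r" by auto
    have "\<not> (m \<le> x \<and> x - m \<in> S)"
    proof
      assume h: "m \<le> x \<and> x - m \<in> S"
      then have "(x - m) mod m = r" using gp[OF r(1)] r(2) by (metis le_mod_geq)
      then have "g r \<le> x - m" using gp[OF r(1)] h by blast
      then show False using r(2) m_pos h by linarith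
    qed
    then show "x \<in> Ap" using gp[OF r(1)] r(2) by (simp add: Ap_def)
  qed
  moreover have "inj_on g {..<m}"
    by (rule inj_onI) (metis gp lessThan_iff)
  ultimately show ?thesis
    by (metis Ap_fin card_image card_lessThan card_mono)
qed

end

context nsg begin

definition "tset a w = {j. 1 \<le> j \<and> j*a \<le> w \<and> w - j*a \<in> S}"
definition "Tset a w = {j. 1 \<le> j \<and> w + j*a \<in> Ap}"

lemma tset_fin: "a \<in> A \<Longrightarrow> finite (tset a w)"
proof -
  assume a: "a \<in> A"
  then have "1 \<le> a" using atom_props[OF a] by auto
  have "tset a w \<subseteq> {..w}"
  proof
    fix j assume "j \<in> tset a w"
    then have "j * a \<le> w" by (simp add: tset_def)
    moreover have "j \<le> j * a" using \<open>1 \<le> a\<close> by simp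
    ultimately have "j \<le> w" by (metis le_trans)
    then show "j \<in> {..w}" by simp
  qed
  then show ?thesis using finite_subset by blast
qed

lemma Tset_fin: "a \<in> A \<Longrightarrow> finite (Tset a w)"
proof -
  assume a: "a \<in> A"
  then have "1 \<le> a" using atom_props[OF a] by auto
  have "Tset a w \<subseteq> {..W}"
  proof
    fix j assume "j \<in> Tset a w"
    then have "w + j*a \<le> W" using Ap_sub by (auto simp: Tset_def)
    moreover have "j \<le> j * a" using \<open>1 \<le> a\<close> by simp
    ultimately have "j \<le> W" by linarith
    then show "j \<in> {..W}" by simp
  qed
  then show ?thesis using finite_subset by blast
qed

lemma sum_tT: assumes a: "a \<in> A"
  shows "(\<Sum>w\<in>Ap. card (tset a w)) = (\<Sum>w\<in>Ap. card (Tset a w))"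
proof -
  have aS: "a \<in> S" using atom_props[OF a] by auto
  define P where "P = Sigma Ap (tset a)"
  define Q where "Q = Sigma Ap (Tset a)"
  have cP: "card P = (\<Sum>w\<in>Ap. card (tset a w))"
    unfolding P_def using card_SigmaI[OF Ap_fin] tset_fin[OF a] by auto
  have cQ: "card Q = (\<Sum>w\<in>Ap. card (Tset a w))"
    unfolding Q_def using card_SigmaI[OF Ap_fin] Tset_fin[OF a] by auto
  define f where "f = (\<lambda>(w::nat, j::nat). (w - j*a, j))"
  have inj: "inj_on f P"
  proof (rule inj_onI)
    fix x y assume x: "x \<in> P" and y: "y \<in> P" and e: "f x = f y"
    obtain w j where xw: "x = (w, j)" by (cases x)
    obtain w' j' where yw: "y = (w', j')" by (cases y)
    have jj: "j = j'" using e xw yw by (simp add: f_def)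
    have "j * a \<le> w" "j' * a \<le> w'" using x y xw yw by (auto simp: P_def tset_def)
    moreover have "w - j * a = w' - j' * a" using e xw yw by (auto simp: f_def)
    ultimately have "w = w'" using jj by simp
    then show "x = y" using xw yw jj by simp
  qed
  have img: "f ` P = Q"
  proof
    show "f ` P \<subseteq> Q"
    proof
      fix x assume "x \<in> f ` P"
      then obtain w j where wj: "w \<in> Ap" "j \<in> tset a w" "x = (w - j*a, j)"
        by (auto simp: f_def P_def)
      have "w - j*a \<in> Ap" using Ap_down[OF wj(1) aS] wj(2) by (auto simp: tset_def)
      moreover have "w - j*a + j*a = w" using wj(2) by (auto simp: tset_def)
      ultimately show "x \<in> Q" using wj by (auto simp: Q_def Tset_def tset_def)
    qed
  next
    show "Q \<subseteq> f ` P"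
    proof
      fix x assume "x \<in> Q"
      then obtain w j where wj: "w \<in> Ap" "j \<in> Tset a w" "x = (w, j)"
        by (auto simp: Q_def)
      have "(w + j*a, j) \<in> P" using wj Ap_S by (auto simp: P_def Tset_def tset_def)
      moreover have "f (w + j*a, j) = x" using wj by (simp add: f_def)
      ultimately show "x \<in> f ` P" by force
    qed
  qed
  have "card P = card Q" using card_image[OF inj] img by simp
  then show ?thesis using cP cQ by simp
qed

lemma T_bound: assumes a: "a \<in> A" and w: "w \<in> Ap"
  shows "w + card (Tset a w) * a \<le> W"
proof (cases "Tset a w = {}")
  case True then show ?thesis using Ap_sub[OF w] by simp
next
  case False
  define J where "J = Tset a w"
  have fin: "finite J" using Tset_fin[OF a] J_def by simp
  have mx: "Max J \<in> J" using Max_in[OF fin] False J_def by simp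
  have "J \<subseteq> {1..Max J}" using fin by (auto simp: J_def Tset_def)
  then have "card J \<le> Max J" using card_mono[of "{1..Max J}" J] by simp
  then have "w + card J * a \<le> w + Max J * a" by simp
  also have "\<dots> \<le> W" using mx Ap_sub by (auto simp: J_def Tset_def)
  finally show ?thesis using J_def by simp
qed

lemma rep_bound: assumes w: "w \<in> Ap"
  shows "w \<le> (\<Sum>a\<in>A - {m}. card (tset a w) * a)"
proof -
  have wS: "w \<in> S" using Ap_S[OF w] .
  then have "w \<in> monoid_gen A" using mg_atoms[OF ns] by simp
  then obtain l where l: "w = (\<Sum>a\<in>A. l a * a)" using rep A_fin by blast
  have AS: "A \<subseteq> S" by (auto simp: atoms_def)
  have spl: "w = l m * m + (\<Sum>a\<in>A - {m}. l a * a)"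
    using l sum.remove[OF A_fin m_atom] by simp
  have lm: "l m = 0"
  proof (rule ccontr)
    assume "l m \<noteq> 0"
    then have "m \<le> l m * m" by simp
    then have le: "m \<le> w" using spl by linarith
    have "w - m = (l m - 1) * m + (\<Sum>a\<in>A - {m}. l a * a)"
      using spl \<open>l m \<noteq> 0\<close> by (simp add: diff_mult_distrib)
    moreover have "(\<Sum>a\<in>A - {m}. l a * a) \<in> S" using sum_in[of "A - {m}" S] A_fin ns AS by auto
    moreover have "(l m - 1) * m \<in> S" using ns_mult[OF ns mS] .
    ultimately have "w - m \<in> S" using ns_add[OF ns] by metis
    then show False using le w by (simp add: Ap_def)
  qed
  then have w2: "w = (\<Sum>a\<in>A - {m}. l a * a)" using spl by simp
  have "l a \<le> card (tset a w)" if a: "a \<in> A - {m}" for a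
  proof -
    have aA: "a \<in> A" using a by simp
    have spl2: "w = l a * a + (\<Sum>b\<in>A - {m} - {a}. l b * b)"
      using w2 sum.remove[of "A - {m}" a] A_fin a by simp
    have restS: "(\<Sum>b\<in>A - {m} - {a}. l b * b) \<in> S" using sum_in[of "A - {m} - {a}" S] A_fin ns AS by auto
    have "{1..l a} \<subseteq> tset a w"
    proof
      fix j assume j: "j \<in> {1..l a}"
      have "j * a \<le> l a * a" using j by simp
      then have jw: "j*a \<le> w" using spl2 by linarith
      have eqj: "w - j*a = (l a - j) * a + (\<Sum>b\<in>A - {m} - {a}. l b * b)"
        using spl2 j by (simp add: diff_mult_distrib)
      have "(l a - j) * a \<in> S" using ns_mult[OF ns] atom_props[OF aA] by blast
      then have "w - j*a \<in> S" using ns_add[OF ns] restS eqj by metis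
      then show "j \<in> tset a w" using j jw by (simp add: tset_def)
    qed
    then have "card {1..l a} \<le> card (tset a w)" by (rule card_mono[OF tset_fin[OF aA]])
    then show ?thesis by simp
  qed
  then have "(\<Sum>a\<in>A - {m}. l a * a) \<le> (\<Sum>a\<in>A - {m}. card (tset a w) * a)"
    by (intro sum_mono) simp
  then show ?thesis using w2 by linarith
qed

lemma sumW: "card A * (\<Sum>w\<in>Ap. w) \<le> (card A - 1) * (card Ap * W)"
proof -
  let ?A' = "A - {m}"
  have cA: "card ?A' = card A - 1" using A_fin m_atom by simp
  have "card A > 0" using A_fin m_atom card_gt_0_iff by blast
  then have cA1: "card A = card ?A' + 1" using cA by linarith
  have each: "(\<Sum>w\<in>Ap. w + card (tset a w) * a) \<le> card Ap * W" if a: "a \<in> ?A'" for a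
  proof -
    have aA: "a \<in> A" using a by simp
    have "(\<Sum>w\<in>Ap. w + card (tset a w) * a) = (\<Sum>w\<in>Ap. w) + (\<Sum>w\<in>Ap. card (tset a w)) * a"
      by (simp add: sum.distrib sum_distrib_right)
    also have "\<dots> = (\<Sum>w\<in>Ap. w) + (\<Sum>w\<in>Ap. card (Tset a w)) * a" using sum_tT[OF aA] by simp
    also have "\<dots> = (\<Sum>w\<in>Ap. w + card (Tset a w) * a)"
      by (simp add: sum.distrib sum_distrib_right)
    also have "\<dots> \<le> (\<Sum>w\<in>Ap. W)" by (intro sum_mono T_bound[OF aA])
    finally show ?thesis by simp
  qed
  have "(\<Sum>a\<in>?A'. \<Sum>w\<in>Ap. w + card (tset a w) * a) \<le> (\<Sum>a\<in>?A'. card Ap * W)"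
    by (intro sum_mono each)
  also have "\<dots> = card ?A' * (card Ap * W)" by simp
  finally have 1: "(\<Sum>a\<in>?A'. \<Sum>w\<in>Ap. w + card (tset a w) * a) \<le> card ?A' * (card Ap * W)" .
  have "(\<Sum>a\<in>?A'. \<Sum>w\<in>Ap. w + card (tset a w) * a)
      = card ?A' * (\<Sum>w\<in>Ap. w) + (\<Sum>w\<in>Ap. \<Sum>a\<in>?A'. card (tset a w) * a)"
  proof -
    have "(\<Sum>a\<in>?A'. \<Sum>w\<in>Ap. w + card (tset a w) * a)
       = (\<Sum>a\<in>?A'. (\<Sum>w\<in>Ap. w) + (\<Sum>w\<in>Ap. card (tset a w) * a))"
      by (simp add: sum.distrib)
    also have "\<dots> = card ?A' * (\<Sum>w\<in>Ap. w) + (\<Sum>a\<in>?A'. \<Sum>w\<in>Ap. card (tset a w) * a)"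
      by (simp add: sum.distrib)
    also have "(\<Sum>a\<in>?A'. \<Sum>w\<in>Ap. card (tset a w) * a) = (\<Sum>w\<in>Ap. \<Sum>a\<in>?A'. card (tset a w) * a)"
      by (rule sum.swap)
    finally show ?thesis .
  qed
  moreover have "(\<Sum>w\<in>Ap. w) \<le> (\<Sum>w\<in>Ap. \<Sum>a\<in>?A'. card (tset a w) * a)"
    by (intro sum_mono rep_bound)
  ultimately have "card ?A' * (\<Sum>w\<in>Ap. w) + (\<Sum>w\<in>Ap. w) \<le> card ?A' * (card Ap * W)"
    using 1 by linarith
  moreover have "card A * (\<Sum>w\<in>Ap. w) = card ?A' * (\<Sum>w\<in>Ap. w) + (\<Sum>w\<in>Ap. w)"
    using cA1 by simp
  moreover have "(card A - 1) * (card Ap * W) = card ?A' * (card Ap * W)" using cA by simp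
  ultimately show ?thesis by linarith
qed

end

lemma ceil_count: assumes "0 < (m::nat)" shows "c \<le> m * card {j::nat. w + j*m < c} + w"
proof (cases "c \<le> w")
  case True then show ?thesis by simp
next
  case False
  define d where "d = c - w"
  have dpos: "1 \<le> d" "w + d = c" using False unfolding d_def by auto
  define q where "q = (d + m - 1) div m"
  have qm: "q * m \<le> d + m - 1" unfolding q_def by (rule div_times_less_eq_dividend)
  have sub: "{..<q} \<subseteq> {j::nat. w + j*m < c}"
  proof
    fix j assume "j \<in> {..<q}"
    then have "Suc j \<le> q" by simp
    then have "Suc j * m \<le> q * m" by (rule mult_le_mono1)
    then have "j * m + m \<le> d + m - 1" using qm by simp
    then have "j * m < d" using dpos assms by linarith
    then show "j \<in> {j. w + j*m < c}" using dpos by simp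
  qed
  have fin: "finite {j::nat. w + j*m < c}"
  proof -
    have "{j::nat. w + j*m < c} \<subseteq> {..<c}"
    proof
      fix j assume "j \<in> {j::nat. w + j*m < c}"
      then have h: "w + j*m < c" by simp
      have jm: "j \<le> j * m" using assms by simp
      from h jm have "j < c" by linarith
      then show "j \<in> {..<c}" by simp
    qed
    then show ?thesis using finite_subset by blast
  qed
  have "card {..<q} \<le> card {j::nat. w + j*m < c}" by (rule card_mono[OF fin sub])
  then have "q \<le> card {j::nat. w + j*m < c}" by simp
  then have "m * q \<le> m * card {j::nat. w + j*m < c}" by simp
  moreover have "d \<le> m * q"
  proof -
    have "d + m - 1 = q * m + (d + m - 1) mod m" unfolding q_def by simp
    moreover have "(d + m - 1) mod m < m" using assms by simp
    ultimately have "d + m - 1 < q * m + m" by linarith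
    then show ?thesis using assms dpos by (simp add: mult.commute)
  qed
  ultimately show ?thesis using dpos by linarith
qed

context nsg begin

lemma count_bound: "card Ap * c \<le> m * conductor' S + (\<Sum>w\<in>Ap. w)"
proof -
  define N where "N w = card {j::nat. w + j*m < c}" for w
  define Sg where "Sg = Sigma Ap (\<lambda>w. {j::nat. w + j*m < c})"
  have finf: "finite {j::nat. w + j*m < c}" for w
  proof -
    have "{j::nat. w + j*m < c} \<subseteq> {..<c}"
    proof
      fix j assume "j \<in> {j::nat. w + j*m < c}"
      then have h: "w + j*m < c" by simp
      have jm: "j \<le> j * m" using m_pos by simp
      from h jm have "j < c" by linarith
      then show "j \<in> {..<c}" by simp
    qed
    then show ?thesis using finite_subset by blast
  qed
  have cSg: "card Sg = (\<Sum>w\<in>Ap. N w)" unfolding Sg_def N_def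
    apply (rule card_SigmaI[OF Ap_fin]) using finf by blast
  define h where "h = (\<lambda>(w::nat, j::nat). w + j * m)"
  have inj: "inj_on h Sg"
  proof (rule inj_onI)
    fix x y assume x: "x \<in> Sg" and y: "y \<in> Sg" and e: "h x = h y"
    obtain w j where xw: "x = (w, j)" by (cases x)
    obtain w' j' where yw: "y = (w', j')" by (cases y)
    have wA: "w \<in> Ap" "w' \<in> Ap" using x y xw yw by (auto simp: Sg_def)
    have e2: "w + j*m = w' + j'*m" using e xw yw by (simp add: h_def)
    have key: "j2 \<le> j1" if "w1 \<in> Ap" "w2 \<in> S" "w1 + j1*m = w2 + j2*m" for w1 w2 j1 j2
    proof (rule ccontr)
      assume nj: "\<not> j2 \<le> j1"
      then have eq: "w1 = w2 + (j2 - j1) * m" using that(3) by (simp add: diff_mult_distrib)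
      have "1 \<le> j2 - j1" using nj by simp
      then have "1 * m \<le> (j2 - j1) * m" by (rule mult_le_mono1)
      then have mj: "m \<le> (j2 - j1) * m" by simp
      then have mw: "m \<le> w1" using eq by linarith
      have e3: "(j2 - j1 - 1) * m = (j2 - j1) * m - m" by (simp add: diff_mult_distrib)
      have e4: "w1 - m = w2 + (j2 - j1 - 1) * m" using eq mj e3 by linarith
      have "w2 + (j2 - j1 - 1) * m \<in> S" using ns_add[OF ns] ns_mult[OF ns mS] that(2) by blast
      then have "w1 - m \<in> S" using e4 by simp
      then show False using that(1) mw by (simp add: Ap_def)
    qed
    have "j' \<le> j" using key[OF wA(1) Ap_S[OF wA(2)] e2] .
    moreover have "j \<le> j'" using key[OF wA(2) Ap_S[OF wA(1)] e2[symmetric]] .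
    ultimately have "j = j'" by simp
    then show "x = y" using e2 xw yw by simp
  qed
  have "h ` Sg \<subseteq> {x \<in> S. x < c}"
  proof
    fix x assume "x \<in> h ` Sg"
    then obtain w j where wj: "w \<in> Ap" "w + j*m < c" "x = w + j*m"
      by (auto simp: Sg_def h_def)
    have "w + j*m \<in> S" using ns_add[OF ns] ns_mult[OF ns mS] Ap_S[OF wj(1)] by blast
    then show "x \<in> {x \<in> S. x < c}" using wj by simp
  qed
  moreover have "finite {x \<in> S. x < c}" by simp
  ultimately have "card (h ` Sg) \<le> conductor' S" unfolding conductor'_def by (rule card_mono[rotated])
  then have sN: "(\<Sum>w\<in>Ap. N w) \<le> conductor' S" using card_image[OF inj] cSg by simp
  have "card Ap * c = (\<Sum>w\<in>Ap. c)" by simp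
  also have "\<dots> \<le> (\<Sum>w\<in>Ap. m * N w + w)" unfolding N_def by (intro sum_mono ceil_count m_pos)
  also have "\<dots> = m * (\<Sum>w\<in>Ap. N w) + (\<Sum>w\<in>Ap. w)" by (simp add: sum.distrib sum_distrib_left)
  also have "\<dots> \<le> m * conductor' S + (\<Sum>w\<in>Ap. w)" using sN by simp
  finally show ?thesis .
qed

lemma main_ineq: "real c - (real (card A) - 1) * (real m - 1) \<le> real (card A) * real (conductor' S)"
proof -
  define k where "k = real (card A)"
  define P where "P = real (card Ap)"
  define s where "s = real (\<Sum>w\<in>Ap. w)"
  define n where "n = real (conductor' S)"
  define mm where "mm = real m"
  define cc where "cc = real c"
  have "card A > 0" using A_fin m_atom card_gt_0_iff by blast
  then have kpos: "k \<ge> 1" unfolding k_def by simp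
  have h1: "k * s \<le> (k - 1) * (P * (cc + mm - 1))"
  proof -
    have "real (card A * (\<Sum>w\<in>Ap. w)) \<le> real ((card A - 1) * (card Ap * W))"
      using sumW by (simp only: of_nat_le_iff)
    moreover have "real W = real c + real m - 1" using m_pos by simp
    moreover have "real (card A - 1) = real (card A) - 1" using \<open>card A > 0\<close> by simp
    ultimately show ?thesis unfolding k_def s_def P_def cc_def mm_def by (simp only: of_nat_mult)
  qed
  have h2: "P * cc \<le> mm * n + s"
  proof -
    have "real (card Ap * c) \<le> real (m * conductor' S + (\<Sum>w\<in>Ap. w))"
      using count_bound by (simp only: of_nat_le_iff)
    then show ?thesis unfolding P_def cc_def mm_def n_def s_def by simp
  qed
  have h3: "mm \<le> P" using Ap_card unfolding mm_def P_def by simp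
  have mp: "mm > 0" using m_pos unfolding mm_def by simp
  have "k * (P * cc - s) \<le> k * (mm * n)" using h2 kpos by (intro mult_left_mono) auto
  moreover have "k * (P * cc - s) \<ge> P * (cc - (k - 1) * (mm - 1))"
  proof -
    have "k * (P * cc - s) = k * P * cc - k * s" by (simp add: algebra_simps)
    also have "\<dots> \<ge> k * P * cc - (k - 1) * (P * (cc + mm - 1))" using h1 by linarith
    finally show ?thesis by (simp add: algebra_simps)
  qed
  ultimately have A1: "P * (cc - (k - 1) * (mm - 1)) \<le> mm * (k * n)" by (simp add: algebra_simps)
  have "cc - (k - 1) * (mm - 1) \<le> k * n"
  proof (cases "cc - (k - 1) * (mm - 1) \<le> 0")
    case True
    moreover have "0 \<le> k * n" using kpos unfolding n_def by simp
    ultimately show ?thesis by linarith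
  next
    case False
    then have "mm * (cc - (k - 1) * (mm - 1)) \<le> P * (cc - (k - 1) * (mm - 1))"
      using h3 by (intro mult_right_mono) auto
    then have "mm * (cc - (k - 1) * (mm - 1)) \<le> mm * (k * n)" using A1 by linarith
    then show ?thesis using mp by simp
  qed
  then show ?thesis unfolding cc_def k_def mm_def n_def .
qed

lemma m_bound: "m \<le> (c div m + 3) ^ card A"
proof -
  define R where "R = c div m + 2"
  have cm: "c + m \<le> R * m"
  proof -
    have "c = c div m * m + c mod m" by simp
    moreover have "c mod m < m" using m_pos by simp
    moreover have "(c div m + 2) * m = c div m * m + 2 * m" by (simp add: algebra_simps)
    ultimately show ?thesis unfolding R_def by linarith
  qed
  define F where "F = (\<lambda>l. \<Sum>a\<in>A. l a * a)"
  have sub: "{c..<c+m} \<subseteq> F ` (PiE A (\<lambda>_. {0..R}))"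
  proof
    fix x assume x: "x \<in> {c..<c+m}"
    then have "x \<in> S" using ns_cond[OF ns] by simp
    then have "x \<in> monoid_gen A" using mg_atoms[OF ns] by simp
    then obtain l where l: "x = (\<Sum>a\<in>A. l a * a)" using rep A_fin by blast
    define l' where "l' = restrict l A"
    have "l' \<in> PiE A (\<lambda>_. {0..R})"
    proof -
      have "l a \<le> R" if a: "a \<in> A" for a
      proof -
        have "l a * a \<le> x" using l member_le_sum[OF a, of "\<lambda>a. l a * a"] A_fin by simp
        moreover have "l a * m \<le> l a * a" using atom_props[OF a] by simp
        moreover have "x < c + m" using x by simp
        ultimately have "l a * m \<le> R * m" using cm by linarith
        then show ?thesis using m_pos by simp
      qed
      then show ?thesis unfolding l'_def by auto
    qed
    moreover have "F l' = x" unfolding F_def l'_def using l by simp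
    ultimately show "x \<in> F ` (PiE A (\<lambda>_. {0..R}))" by blast
  qed
  have "m = card {c..<c+m}" by simp
  also have "\<dots> \<le> card (F ` (PiE A (\<lambda>_. {0..R})))"
    using sub by (intro card_mono) (auto intro: finite_PiE A_fin)
  also have "\<dots> \<le> card (PiE A (\<lambda>_. {0..R}))" by (rule card_image_le) (auto intro: finite_PiE A_fin)
  also have "\<dots> = (R + 1) ^ card A" using card_PiE[OF A_fin, of "\<lambda>_. {0..R}"] by simp
  finally show ?thesis unfolding R_def by (simp add: numeral_3_eq_3)
qed

end

lemma fin_bounded: "finite {S. numerical_semigroup S \<and> conductor S \<le> C}"
proof -
  have "{S. numerical_semigroup S \<and> conductor S \<le> C} \<subseteq> (\<lambda>B. B \<union> {C..}) ` Pow {..<C}"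
  proof
    fix S assume S: "S \<in> {S. numerical_semigroup S \<and> conductor S \<le> C}"
    then have ns: "numerical_semigroup S" and cC: "conductor S \<le> C" by auto
    have "S = (S \<inter> {..<C}) \<union> {C..}"
    proof
      show "S \<subseteq> S \<inter> {..<C} \<union> {C..}" by auto
      show "S \<inter> {..<C} \<union> {C..} \<subseteq> S" using ns_cond[OF ns] cC by auto
    qed
    then show "S \<in> (\<lambda>B. B \<union> {C..}) ` Pow {..<C}" by blast
  qed
  then show ?thesis by (rule finite_subset) simp
qed

context nsg begin

lemma good: assumes k: "card A = k" and kp: "k > 0" and e: "\<epsilon> > 0" and M: "1 / \<epsilon> < real M"
  and big: "M * (M + 3) ^ k < c"
  shows "c > 0 \<and> real (conductor' S) / real c > 1 / real k - \<epsilon>"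
proof -
  have cpos: "c > 0" using big by simp
  have Mpos: "real M > 0" using M e by (meson less_trans zero_less_divide_1_iff)
  have "M \<le> c div m"
  proof (rule ccontr)
    assume "\<not> M \<le> c div m"
    then have lt: "c div m + 1 \<le> M" by simp
    then have "c div m + 3 \<le> M + 3" by simp
    then have "(c div m + 3) ^ k \<le> (M + 3) ^ k" by (rule power_mono) simp
    then have mb: "m \<le> (M + 3) ^ k" using m_bound k by simp
    have "c = c div m * m + c mod m" by simp
    moreover have "c mod m < m" using m_pos by simp
    moreover have "(c div m + 1) * m = c div m * m + m" by simp
    ultimately have "c < (c div m + 1) * m" by linarith
    also have "\<dots> \<le> M * m" using lt by (rule mult_le_mono1)
    also have "\<dots> \<le> M * (M + 3) ^ k" using mb by simp
    finally show False using big by simp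
  qed
  then have "M * m \<le> c div m * m" by (rule mult_le_mono1)
  also have "\<dots> \<le> c" by (rule div_times_less_eq_dividend)
  finally have Mm: "real M * real m \<le> real c" by (metis of_nat_le_iff of_nat_mult)
  define n where "n = real (conductor' S)"
  define kk where "kk = real k"
  define mm where "mm = real m"
  define cc where "cc = real c"
  have kk1: "kk \<ge> 1" using kp unfolding kk_def by simp
  have mm1: "mm \<ge> 1" using m_pos unfolding mm_def by simp
  have ccp: "cc > 0" using cpos unfolding cc_def by simp
  have mi: "cc - (kk - 1) * (mm - 1) \<le> kk * n" using main_ineq k unfolding kk_def mm_def cc_def n_def by simp
  have "(kk - 1) * (mm - 1) \<le> kk * mm" using kk1 mm1 by (intro mult_mono) auto
  then have h1: "cc - kk * mm \<le> kk * n" using mi by linarith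
  have h2: "1 / kk - mm / cc \<le> n / cc"
  proof -
    have "1 / kk - mm / cc = (cc - kk * mm) / (kk * cc)" using kk1 ccp by (simp add: field_simps)
    also have "\<dots> \<le> (kk * n) / (kk * cc)" using h1 kk1 ccp by (intro divide_right_mono) auto
    also have "\<dots> = n / cc" using kk1 by simp
    finally show ?thesis .
  qed
  have h3: "mm / cc \<le> 1 / real M" using Mm Mpos ccp unfolding mm_def cc_def
    by (simp add: field_simps)
  have h4: "1 / real M < \<epsilon>" using M e Mpos by (simp add: field_simps)
  have "n / cc > 1 / kk - \<epsilon>" using h2 h3 h4 by linarith
  then show ?thesis using cpos unfolding n_def kk_def cc_def by simp
qed

end

theorem theorem2:
  fixes k :: nat and \<epsilon> :: real
  assumes "k > 0" and "\<epsilon> > 0"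
  shows "finite {S. numerical_semigroup S \<and> embedding_dimension S = k \<and>
           \<not> (conductor S > 0 \<and>
               real (conductor' S) / real (conductor S) > 1 / real k - \<epsilon>)}"
proof -
  obtain M :: nat where M: "1 / \<epsilon> < real M" using reals_Archimedean2 by blast
  let ?C = "M * (M + 3) ^ k"
  have "{S. numerical_semigroup S \<and> embedding_dimension S = k \<and>
           \<not> (conductor S > 0 \<and>
               real (conductor' S) / real (conductor S) > 1 / real k - \<epsilon>)}
        \<subseteq> {S. numerical_semigroup S \<and> conductor S \<le> ?C}"
  proof
    fix S assume S: "S \<in> {S. numerical_semigroup S \<and> embedding_dimension S = k \<and>
           \<not> (conductor S > 0 \<and>
               real (conductor' S) / real (conductor S) > 1 / real k - \<epsilon>)}"
    then have ns: "numerical_semigroup S" by simp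
    interpret nsg S by (rule nsg.intro[OF ns])
    have k: "card (atoms S) = k" using S mgs_atoms[OF ns] by (simp add: embedding_dimension_def)
    have "conductor S \<le> ?C"
    proof (rule ccontr)
      assume "\<not> conductor S \<le> ?C"
      then have "?C < conductor S" by simp
      from good[OF k assms(1) assms(2) M this] S show False by simp
    qed
    then show "S \<in> {S. numerical_semigroup S \<and> conductor S \<le> ?C}" using ns by simp
  qed
  then show ?thesis by (rule finite_subset) (rule fin_bounded)
qed

end
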